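(* For each $n\in\mathbb{N}$ let $A_n\subseteq\mathcal{R}$ be L-measurable, and suppose $\lim_{N\to\infty}M\big(\bigcap_{n=1}^N A_n\big)$ exists in $\mathcal{R}$. Then $\bigcap_{n=1}^\infty A_n$ is L-measurable.
   Context: $\mathcal{R}$ denotes the Levi-Civita field: functions $x:\mathbb{Q}\to\mathbb{R}$ with left-finite support, with componentwise addition and formal power series multiplication, ordered by $x>0$ iff $x\ne0$ and $x[\min\operatorname{supp}x]>0$; it is a non-Archimedean ordered field extension of $\mathbb{R}$, Cauchy complete in the order topology, in which all limits and series are taken (a series $\sum a_n$ converges iff $a_n\to0$). An interval is a set $[a,b],[a,b),(a,b]$ or $(a,b)$ with $a<b$ in $\mathcal{R}$, of length $l=b-a$. A cover of $A\subseteq\mathcal{R}$ is a sequence of intervals $(S_n)_{n\ge1}$ with $A\subseteq\bigcup_n S_n$ and $\sum_n l(S_n)$ convergent in $\mathcal{R}$. $A$ is called outer measurable if the infimum $\inf\{\sum_n l(S_n): (S_n)\text{ a cover of }A\}$ exists in $\mathcal{R}$; this infimum is then called the outer measure $M_u(A)$. An outer measurable set $A\subseteq\mathcal{R}$ is L-measurable if for every outer measurable $B\subseteq\mathcal{R}$ both $A\cap B$ and $A^c\cap B$ (where $A^c=\mathcal{R}\setminus A$) are outer measurable and $M_u(B)=M_u(A\cap B)+M_u(A^c\cap B)$; then its L-measure is $M(A):=M_u(A)$. Finite intersections of L-measurable sets are L-measurable, so $M(\bigcap_{n=1}^N A_n)$ is defined. *)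

theory Defs
  imports Complex_Main
begin

section \<open>The Levi-Civita field (additive ordered structure)\<close>

definition left_finite :: "(rat \<Rightarrow> real) \<Rightarrow> bool" where
  "left_finite x \<longleftrightarrow> (\<forall>q. finite {p. p < q \<and> x p \<noteq> 0})"

typedef lc = "{x :: rat \<Rightarrow> real. left_finite x}"
  morphisms lc_coeff Abs_lc
  by (rule exI[of _ "\<lambda>_. 0"]) (simp add: left_finite_def)

setup_lifting type_definition_lc

lift_definition lc_zero :: lc is "\<lambda>_. 0"
  by (simp add: left_finite_def)

lift_definition lc_add :: "lc \<Rightarrow> lc \<Rightarrow> lc" is "\<lambda>x y q. x q + y q"
proof -
  fix x y :: "rat \<Rightarrow> real"
  assume "left_finite x" "left_finite y"
  then show "left_finite (\<lambda>q. x q + y q)"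
  proof (unfold left_finite_def, intro allI)
    fix q
    have "{p. p < q \<and> x p + y p \<noteq> 0} \<subseteq> {p. p < q \<and> x p \<noteq> 0} \<union> {p. p < q \<and> y p \<noteq> 0}"
      by auto
    moreover have "finite ({p. p < q \<and> x p \<noteq> 0} \<union> {p. p < q \<and> y p \<noteq> 0})"
      using \<open>left_finite x\<close> \<open>left_finite y\<close> by (simp add: left_finite_def)
    ultimately show "finite {p. p < q \<and> x p + y p \<noteq> 0}" by (rule finite_subset)
  qed
qed

lift_definition lc_neg :: "lc \<Rightarrow> lc" is "\<lambda>x q. - x q"
  by (simp add: left_finite_def)

instantiation lc :: "{zero, plus, uminus, minus, ord}"
begin
definition "0 = lc_zero"
definition "x + y = lc_add x y"
definition "- x = lc_neg x"
definition "x - y = lc_add x (lc_neg y)"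
definition "x < y \<longleftrightarrow>
  (\<exists>q. lc_coeff (y - x) q > 0 \<and> (\<forall>p<q. lc_coeff (y - x) p = 0))"
definition "x \<le> y \<longleftrightarrow> x = y \<or> (x::lc) < y"
instance ..
end

definition lc_tendsto :: "(nat \<Rightarrow> lc) \<Rightarrow> lc \<Rightarrow> bool" where
  "lc_tendsto f L \<longleftrightarrow> (\<forall>e>0. \<exists>N. \<forall>n\<ge>N. L - e < f n \<and> f n < L + e)"

fun lc_psum :: "(nat \<Rightarrow> lc) \<Rightarrow> nat \<Rightarrow> lc" where
  "lc_psum a 0 = 0"
| "lc_psum a (Suc n) = lc_psum a n + a n"

definition lc_sums :: "(nat \<Rightarrow> lc) \<Rightarrow> lc \<Rightarrow> bool" where
  "lc_sums a s \<longleftrightarrow> lc_tendsto (lc_psum a) s"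

definition interval_with_ends :: "lc set \<Rightarrow> lc \<Rightarrow> lc \<Rightarrow> bool" where
  "interval_with_ends S a b \<longleftrightarrow> a < b \<and>
     (S = {a..b} \<or> S = {a..<b} \<or> S = {a<..b} \<or> S = {a<..<b})"

definition cover_sum :: "lc set \<Rightarrow> lc \<Rightarrow> bool" where
  "cover_sum A s \<longleftrightarrow> (\<exists>(I :: nat \<Rightarrow> lc set) a b.
     (\<forall>n. interval_with_ends (I n) (a n) (b n)) \<and> A \<subseteq> (\<Union>n. I n) \<and>
     lc_sums (\<lambda>n. b n - a n) s)"

definition is_lc_inf :: "lc set \<Rightarrow> lc \<Rightarrow> bool" where
  "is_lc_inf S m \<longleftrightarrow> (\<forall>s\<in>S. m \<le> s) \<and> (\<forall>m'. (\<forall>s\<in>S. m' \<le> s) \<longrightarrow> m' \<le> m)"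

definition outer_measurable :: "lc set \<Rightarrow> bool" where
  "outer_measurable A \<longleftrightarrow> (\<exists>m. is_lc_inf {s. cover_sum A s} m)"

definition outer_measure :: "lc set \<Rightarrow> lc" where
  "outer_measure A = (THE m. is_lc_inf {s. cover_sum A s} m)"

definition L_measurable :: "lc set \<Rightarrow> bool" where
  "L_measurable A \<longleftrightarrow> outer_measurable A \<and>
     (\<forall>B. outer_measurable B \<longrightarrow>
        outer_measurable (A \<inter> B) \<and> outer_measurable (- A \<inter> B) \<and>
        outer_measure B = outer_measure (A \<inter> B) + outer_measure (- A \<inter> B))"

definition L_measure :: "lc set \<Rightarrow> lc" where
  "L_measure A = outer_measure A"

end

theory Submission
  imports Defs "HOL-Library.Nat_Bijection"
begin

lemma lc_coeff_zero[simp]: "lc_coeff 0 q = 0"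
  by (simp add: zero_lc_def lc_zero.rep_eq)
lemma lc_coeff_add[simp]: "lc_coeff (x + y) q = lc_coeff x q + lc_coeff y q"
  by (simp add: plus_lc_def lc_add.rep_eq)
lemma lc_coeff_neg[simp]: "lc_coeff (- x) q = - lc_coeff x q"
  by (simp add: uminus_lc_def lc_neg.rep_eq)
lemma lc_coeff_diff[simp]: "lc_coeff (x - y) q = lc_coeff x q - lc_coeff y q"
  by (simp add: minus_lc_def lc_add.rep_eq lc_neg.rep_eq)
lemma lc_eqI: "(\<And>q. lc_coeff x q = lc_coeff y q) \<Longrightarrow> x = y"
  by (metis lc_coeff_inject ext)

definition Pos :: "lc \<Rightarrow> bool" where
  "Pos z \<longleftrightarrow> (\<exists>q. lc_coeff z q > 0 \<and> (\<forall>p<q. lc_coeff z p = 0))"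

lemma lc_less_Pos: "(x::lc) < y \<longleftrightarrow> Pos (y - x)"
  by (simp add: less_lc_def Pos_def)

lemma Pos_not_neg: "Pos z \<Longrightarrow> \<not> Pos (- z)"
proof
  assume "Pos z" "Pos (-z)"
  then obtain q q' where q: "lc_coeff z q > 0" "\<forall>p<q. lc_coeff z p = 0"
     and q': "lc_coeff (-z) q' > 0" "\<forall>p<q'. lc_coeff (-z) p = 0"
    unfolding Pos_def by blast
  show False
  proof (cases q q' rule: linorder_cases)
    case less then show ?thesis using q q' by force
  next
    case equal then show ?thesis using q q' by simp
  next
    case greater then show ?thesis using q q' by force
  qed
qed

lemma Pos_add: "Pos z \<Longrightarrow> Pos w \<Longrightarrow> Pos (z + w)"
proof -
  assume "Pos z" "Pos w"
  then obtain q q' where q: "lc_coeff z q > 0" "\<forall>p<q. lc_coeff z p = 0"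
     and q': "lc_coeff w q' > 0" "\<forall>p<q'. lc_coeff w p = 0"
    unfolding Pos_def by blast
  show ?thesis
  proof (cases q q' rule: linorder_cases)
    case less then show ?thesis using q q' unfolding Pos_def
      by (intro exI[of _ q]) auto
  next
    case equal then show ?thesis using q q' unfolding Pos_def
      by (intro exI[of _ q]) auto
  next
    case greater then show ?thesis using q q' unfolding Pos_def
      by (intro exI[of _ q']) auto
  qed
qed

lemma lc_lead_exists:
  assumes "z \<noteq> 0"
  shows "\<exists>m. lc_coeff z m \<noteq> 0 \<and> (\<forall>p<m. lc_coeff z p = 0)"
proof -
  obtain q0 where q0: "lc_coeff z q0 \<noteq> 0"
    using assms lc_eqI[of z 0] by auto
  define S where "S = {p. p < q0 + 1 \<and> lc_coeff z p \<noteq> 0}"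
  have fin: "finite S" using lc_coeff[of z] unfolding S_def left_finite_def by auto
  have ne: "q0 \<in> S" using q0 unfolding S_def by simp
  define m where "m = Min S"
  have "m \<in> S" using fin ne Min_in unfolding m_def by blast
  moreover have "\<forall>p<m. lc_coeff z p = 0"
  proof (intro allI impI)
    fix p assume "p < m"
    show "lc_coeff z p = 0"
    proof (rule ccontr)
      assume "lc_coeff z p \<noteq> 0"
      moreover have "p < q0 + 1" using \<open>p < m\<close> \<open>m \<in> S\<close> unfolding S_def by simp
      ultimately have "p \<in> S" unfolding S_def by simp
      then have "m \<le> p" unfolding m_def using fin Min_le by blast
      then show False using \<open>p < m\<close> by simp
    qed
  qed
  ultimately show ?thesis unfolding S_def by blast
qed

lemma Pos_total: "z \<noteq> 0 \<Longrightarrow> Pos z \<or> Pos (- z)"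
proof -
  assume "z \<noteq> 0"
  then obtain m where m: "lc_coeff z m \<noteq> 0" "\<forall>p<m. lc_coeff z p = 0"
    using lc_lead_exists by blast
  show ?thesis
  proof (cases "lc_coeff z m > 0")
    case True then show ?thesis using m unfolding Pos_def by blast
  next
    case False then have "lc_coeff (-z) m > 0" using m by simp
    then show ?thesis using m unfolding Pos_def by (intro disjI2 exI[of _ m]) auto
  qed
qed

lemma Pos_nz: "Pos z \<Longrightarrow> z \<noteq> 0"
  unfolding Pos_def by auto

instance lc :: ab_group_add
proof
  fix a b c :: lc
  show "a + b + c = a + (b + c)" by (rule lc_eqI) simp
  show "a + b = b + a" by (rule lc_eqI) simp
  show "0 + a = a" by (rule lc_eqI) simp
  show "- a + a = 0" by (rule lc_eqI) simp
  show "a - b = a + - b" by (rule lc_eqI) simp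
qed

lemma minus_diff_lc: "- ((y::lc) - x) = x - y" by simp

instance lc :: linordered_ab_group_add
proof
  fix x y z :: lc
  show "(x < y) = (x \<le> y \<and> \<not> y \<le> x)"
    unfolding less_eq_lc_def lc_less_Pos
    using Pos_not_neg[of "y - x"] Pos_nz[of "y - x"] by auto
  show "x \<le> x" by (simp add: less_eq_lc_def)
  show "x \<le> y \<Longrightarrow> y \<le> z \<Longrightarrow> x \<le> z"
    unfolding less_eq_lc_def lc_less_Pos
    using Pos_add[of "z - y" "y - x"] by (auto simp: algebra_simps)
  show "x \<le> y \<Longrightarrow> y \<le> x \<Longrightarrow> x = y"
    unfolding less_eq_lc_def lc_less_Pos
    using Pos_not_neg[of "y - x"] by auto
  show "x \<le> y \<or> y \<le> x"
    unfolding less_eq_lc_def lc_less_Pos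
    using Pos_total[of "y - x"] by auto
  show "x \<le> y \<Longrightarrow> z + x \<le> z + y"
    unfolding less_eq_lc_def lc_less_Pos by auto
qed


lemma pos_lead: "lc_coeff z m > 0 \<Longrightarrow> (\<forall>p<m. lc_coeff z p = 0) \<Longrightarrow> (0::lc) < z"
  unfolding lc_less_Pos Pos_def by auto

lemma neg_lead: "lc_coeff z m < 0 \<Longrightarrow> (\<forall>p<m. lc_coeff z p = 0) \<Longrightarrow> z < (0::lc)"
  unfolding lc_less_Pos Pos_def by (intro exI[of _ m]) auto

lemma pos_leadE: "(0::lc) < z \<Longrightarrow> (\<And>m. lc_coeff z m > 0 \<Longrightarrow> (\<forall>p<m. lc_coeff z p = 0) \<Longrightarrow> P) \<Longrightarrow> P"
  unfolding lc_less_Pos Pos_def by auto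

definition small :: "rat \<Rightarrow> lc \<Rightarrow> bool" where
  "small r x \<longleftrightarrow> (\<forall>p\<le>r. lc_coeff x p = 0)"

lemma small_0[simp]: "small r 0" by (simp add: small_def)
lemma small_add: "small r x \<Longrightarrow> small r y \<Longrightarrow> small r (x + y)" by (simp add: small_def)
lemma small_neg: "small r x \<Longrightarrow> small r (- x)" by (simp add: small_def)
lemma small_diff: "small r x \<Longrightarrow> small r y \<Longrightarrow> small r (x - y)" by (simp add: small_def)
lemma small_anti: "small r x \<Longrightarrow> r' \<le> r \<Longrightarrow> small r' x" by (simp add: small_def)

lemma lead_add_small:
  assumes "lc_coeff d r > 0" "\<forall>p<r. lc_coeff d p = 0" "small r y"
  shows "0 < d + y"
  using assms by (intro pos_lead[of _ r]) (auto simp: small_def)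

lemma small_less:
  assumes "0 < (e::lc)"
  obtains r where "\<And>x. small r x \<Longrightarrow> x < e"
proof -
  obtain r where r: "lc_coeff e r > 0" "\<forall>p<r. lc_coeff e p = 0" using assms pos_leadE by blast
  have "\<And>x. small r x \<Longrightarrow> x < e"
  proof -
    fix x assume "small r x"
    then have "0 < e + - x" using lead_add_small[OF r] small_neg by blast
    then show "x < e" by (simp add: algebra_simps)
  qed
  then show ?thesis using that by blast
qed

lemma small_mono:
  assumes "0 \<le> x" "x \<le> y" "small r y"
  shows "small r x"
proof (rule ccontr)
  assume "\<not> small r x"
  then obtain p where p: "p \<le> r" "lc_coeff x p \<noteq> 0" by (auto simp: small_def)
  then have "x \<noteq> 0" by auto
  then obtain m where m: "lc_coeff x m \<noteq> 0" "\<forall>p<m. lc_coeff x p = 0" using lc_lead_exists by blast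
  have "m \<le> p" using m p by (metis not_le)
  have "lc_coeff x m > 0"
  proof (rule ccontr)
    assume "\<not> lc_coeff x m > 0"
    then have "x < 0" using m by (intro neg_lead[of _ m]) auto
    then show False using assms by simp
  qed
  have "y - x < 0"
    using m \<open>m \<le> p\<close> p assms(3) \<open>lc_coeff x m > 0\<close>
    by (intro neg_lead[of _ m]) (auto simp: small_def)
  then show False using assms by simp
qed

lemma le_by_small:
  assumes "\<And>r. \<exists>x. small r x \<and> m \<le> s + x"
  shows "m \<le> (s::lc)"
proof (rule ccontr)
  assume "\<not> m \<le> s"
  then have "0 < m - s" by simp
  then obtain r where r: "\<And>x. small r x \<Longrightarrow> x < m - s" using small_less by blast
  obtain x where "small r x" "m \<le> s + x" using assms by blast
  then show False using r[of x] by (simp add: algebra_simps)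
qed

lift_definition tiny :: "rat \<Rightarrow> lc" is "\<lambda>q p. if p = q then 1 else 0"
proof -
  fix q :: rat
  have "{p. p < r \<and> (if p = q then 1 else 0::real) \<noteq> 0} \<subseteq> {q}" for r by auto
  then show "left_finite (\<lambda>p. if p = q then 1 else 0::real)"
    unfolding left_finite_def by (meson finite.emptyI finite_insert finite_subset)
qed

lemma tiny_coeff[simp]: "lc_coeff (tiny q) p = (if p = q then 1 else 0)"
  by (simp add: tiny.rep_eq)
lemma tiny_pos: "0 < tiny q"
  by (rule pos_lead[of _ q]) auto
lemma tiny_small: "r < q \<Longrightarrow> small r (tiny q)"
  by (auto simp: small_def)

definition conv :: "(nat \<Rightarrow> lc) \<Rightarrow> lc \<Rightarrow> bool" where
  "conv f L \<longleftrightarrow> (\<forall>r. \<exists>N. \<forall>n\<ge>N. small r (f n - L))"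

lemma between_small:
  assumes "- tiny (r + 1) < x" "x < tiny (r + 1)"
  shows "small r x"
proof (rule ccontr)
  let ?e = "tiny (r + 1)"
  assume "\<not> small r x"
  then obtain p where p: "p \<le> r" "lc_coeff x p \<noteq> 0" by (auto simp: small_def)
  then have "x \<noteq> 0" by auto
  then obtain m where m: "lc_coeff x m \<noteq> 0" "\<forall>p<m. lc_coeff x p = 0" using lc_lead_exists by blast
  have "m \<le> p" using m p by (metis not_le)
  then have "m < r + 1" using p by simp
  show False
  proof (cases "lc_coeff x m > 0")
    case True
    have "?e - x < 0" using True m \<open>m < r+1\<close> by (intro neg_lead[of _ m]) auto
    then show False using assms by simp
  next
    case False
    then have "lc_coeff x m < 0" using m by simp
    then have "?e + x < 0" using m \<open>m < r+1\<close> by (intro neg_lead[of _ m]) auto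
    moreover have "0 < ?e + x" using assms(1) by (metis add.commute diff_gt_0_iff_gt diff_minus_eq_add)
    ultimately show False by simp
  qed
qed

lemma tendsto_conv: "lc_tendsto f L \<longleftrightarrow> conv f L"
proof
  assume H: "lc_tendsto f L"
  show "conv f L" unfolding conv_def
  proof
    fix r
    obtain N where N: "\<forall>n\<ge>N. L - tiny (r+1) < f n \<and> f n < L + tiny (r+1)"
      using H tiny_pos unfolding lc_tendsto_def by blast
    have "\<forall>n\<ge>N. small r (f n - L)"
      using N by (intro allI impI between_small) (auto simp: algebra_simps)
    then show "\<exists>N. \<forall>n\<ge>N. small r (f n - L)" by blast
  qed
next
  assume H: "conv f L"
  show "lc_tendsto f L" unfolding lc_tendsto_def
  proof (intro allI impI)
    fix e :: lc assume "0 < e"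
    then obtain r where r: "\<And>x. small r x \<Longrightarrow> x < e" using small_less by blast
    obtain N where N: "\<forall>n\<ge>N. small r (f n - L)" using H unfolding conv_def by blast
    have "\<forall>n\<ge>N. L - e < f n \<and> f n < L + e"
    proof (intro allI impI conjI)
      fix n assume "n \<ge> N"
      then have s: "small r (f n - L)" using N by simp
      show "f n < L + e" using r[OF s] by (simp add: algebra_simps)
      show "L - e < f n" using r[OF small_neg[OF s]] by (simp add: algebra_simps)
    qed
    then show "\<exists>N. \<forall>n\<ge>N. L - e < f n \<and> f n < L + e" by blast
  qed
qed

lemma conv_unique: "conv f L \<Longrightarrow> conv f L' \<Longrightarrow> L = L'"
proof (rule lc_eqI)
  fix q assume a: "conv f L" "conv f L'"
  obtain N where "\<forall>n\<ge>N. small q (f n - L)" using a(1) unfolding conv_def by blast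
  moreover obtain N' where "\<forall>n\<ge>N'. small q (f n - L')" using a(2) unfolding conv_def by blast
  ultimately have "small q ((f (max N N') - L') - (f (max N N') - L))"
    by (intro small_diff[of q "f (max N N') - L'"]) auto
  then show "lc_coeff L q = lc_coeff L' q" by (simp add: small_def)
qed

lemma conv_const: "conv (\<lambda>n. c) c" by (simp add: conv_def)

lemma conv_add: "conv f a \<Longrightarrow> conv g b \<Longrightarrow> conv (\<lambda>n. f n + g n) (a + b)"
  unfolding conv_def
proof
  fix r assume a: "\<forall>r. \<exists>N. \<forall>n\<ge>N. small r (f n - a)" "\<forall>r. \<exists>N. \<forall>n\<ge>N. small r (g n - b)"
  obtain N where N: "\<forall>n\<ge>N. small r (f n - a)" using a(1) by blast
  obtain N' where N': "\<forall>n\<ge>N'. small r (g n - b)" using a(2) by blast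
  have "\<forall>n\<ge>max N N'. small r (f n + g n - (a + b))"
  proof (intro allI impI)
    fix n assume "max N N' \<le> n"
    then have "small r ((f n - a) + (g n - b))" using N N' by (intro small_add) auto
    then show "small r (f n + g n - (a + b))" by (simp add: algebra_simps)
  qed
  then show "\<exists>N. \<forall>n\<ge>N. small r (f n + g n - (a + b))" by blast
qed

lemma conv_neg: "conv f a \<Longrightarrow> conv (\<lambda>n. - f n) (- a)"
  unfolding conv_def by (metis (no_types, lifting) minus_diff_minus small_neg)

lemma conv_diff: "conv f a \<Longrightarrow> conv g b \<Longrightarrow> conv (\<lambda>n. f n - g n) (a - b)"
  using conv_add[OF _ conv_neg, of f a g b] by simp

lemma conv_le:
  assumes "conv f a" "conv g b" "\<And>n. f n \<le> g n"
  shows "a \<le> b"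
proof (rule ccontr)
  assume "\<not> a \<le> b"
  then have "0 < a - b" by simp
  then obtain r where r: "lc_coeff (a - b) r > 0" "\<forall>p<r. lc_coeff (a - b) p = 0"
    using pos_leadE by blast
  obtain N where N: "\<forall>n\<ge>N. small r (f n - a)" using assms(1) unfolding conv_def by blast
  obtain N' where N': "\<forall>n\<ge>N'. small r (g n - b)" using assms(2) unfolding conv_def by blast
  let ?n = "max N N'"
  have "small r ((f ?n - a) - (g ?n - b))" using N N' by (intro small_diff[of r "f ?n - a"]) auto
  then have "0 < (a - b) + ((f ?n - a) - (g ?n - b))" by (rule lead_add_small[OF r])
  then have "g ?n < f ?n" by (simp add: algebra_simps)
  then show False using assms(3)[of ?n] by simp
qed

lemma conv_shift: "conv (\<lambda>n. f (Suc n)) L \<longleftrightarrow> conv f L"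
  unfolding conv_def
proof
  assume a: "\<forall>r. \<exists>N. \<forall>n\<ge>N. small r (f (Suc n) - L)"
  show "\<forall>r. \<exists>N. \<forall>n\<ge>N. small r (f n - L)"
  proof
    fix r obtain N where "\<forall>n\<ge>N. small r (f (Suc n) - L)" using a by blast
    then have "\<forall>n\<ge>Suc N. small r (f n - L)" by (metis Suc_le_D Suc_le_mono)
    then show "\<exists>N. \<forall>n\<ge>N. small r (f n - L)" by blast
  qed
next
  assume a: "\<forall>r. \<exists>N. \<forall>n\<ge>N. small r (f n - L)"
  show "\<forall>r. \<exists>N. \<forall>n\<ge>N. small r (f (Suc n) - L)"
  proof
    fix r obtain N where "\<forall>n\<ge>N. small r (f n - L)" using a by blast
    then have "\<forall>n\<ge>N. small r (f (Suc n) - L)" by simp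
    then show "\<exists>N. \<forall>n\<ge>N. small r (f (Suc n) - L)" by blast
  qed
qed


lemma psum_coeff: "lc_coeff (lc_psum a n) p = (\<Sum>i<n. lc_coeff (a i) p)"
  by (induction n) auto

definition fnull :: "('i \<Rightarrow> lc) \<Rightarrow> bool" where
  "fnull x \<longleftrightarrow> (\<forall>r. finite {i. \<not> small r (x i)})"

definition csum :: "('i \<Rightarrow> lc) \<Rightarrow> lc" where
  "csum x = Abs_lc (\<lambda>p. \<Sum>i\<in>{i. lc_coeff (x i) p \<noteq> 0}. lc_coeff (x i) p)"

lemma supp_sub: "{i. lc_coeff (x i) p \<noteq> 0} \<subseteq> {i. \<not> small p (x i)}"
  by (auto simp: small_def)

lemma fnull_supp_finite: "fnull x \<Longrightarrow> finite {i. lc_coeff (x i) p \<noteq> 0}"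
  using finite_subset[OF supp_sub] unfolding fnull_def by blast

lemma nat_bounded: "finite (S::nat set) \<Longrightarrow> \<exists>k. S \<subseteq> {..<k}"
  by (intro exI[of _ "Suc (Max S)"]) (auto simp: less_Suc_eq_le)

lemma csum_coeff:
  assumes "fnull x"
  shows "lc_coeff (csum x) p = (\<Sum>i\<in>{i. lc_coeff (x i) p \<noteq> 0}. lc_coeff (x i) p)"
proof -
  have "left_finite (\<lambda>p. \<Sum>i\<in>{i. lc_coeff (x i) p \<noteq> 0}. lc_coeff (x i) p)"
    unfolding left_finite_def
  proof
    fix q
    have "{p. p < q \<and> (\<Sum>i\<in>{i. lc_coeff (x i) p \<noteq> 0}. lc_coeff (x i) p) \<noteq> 0}
       \<subseteq> (\<Union>i\<in>{i. \<not> small q (x i)}. {p. p < q \<and> lc_coeff (x i) p \<noteq> 0})"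
    proof
      fix p assume "p \<in> {p. p < q \<and> (\<Sum>i\<in>{i. lc_coeff (x i) p \<noteq> 0}. lc_coeff (x i) p) \<noteq> 0}"
      then have p: "p < q" "(\<Sum>i\<in>{i. lc_coeff (x i) p \<noteq> 0}. lc_coeff (x i) p) \<noteq> 0" by auto
      then obtain i where "lc_coeff (x i) p \<noteq> 0" by (metis (mono_tags, lifting) empty_Collect_eq sum.empty)
      moreover have "\<not> small q (x i)" using p(1) \<open>lc_coeff (x i) p \<noteq> 0\<close>
        unfolding small_def using less_imp_le by blast
      ultimately show "p \<in> (\<Union>i\<in>{i. \<not> small q (x i)}. {p. p < q \<and> lc_coeff (x i) p \<noteq> 0})"
        using p(1) by blast
    qed
    moreover have "finite (\<Union>i\<in>{i. \<not> small q (x i)}. {p. p < q \<and> lc_coeff (x i) p \<noteq> 0})"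
      using assms lc_coeff unfolding fnull_def left_finite_def by blast
    ultimately show "finite {p. p < q \<and> (\<Sum>i\<in>{i. lc_coeff (x i) p \<noteq> 0}. lc_coeff (x i) p) \<noteq> 0}"
      by (rule finite_subset)
  qed
  then show ?thesis unfolding csum_def by (simp add: Abs_lc_inverse)
qed

lemma csum_coeff_sub:
  assumes "fnull x" "finite S" "{i. lc_coeff (x i) p \<noteq> 0} \<subseteq> S"
  shows "lc_coeff (csum x) p = (\<Sum>i\<in>S. lc_coeff (x i) p)"
  unfolding csum_coeff[OF assms(1)] using assms(2,3)
  by (intro sum.mono_neutral_left) auto

lemma fnull_conv: "fnull a \<Longrightarrow> conv (lc_psum a) (csum a)"
  unfolding conv_def
proof
  fix r assume a: "fnull a"
  obtain N where N: "{i. \<not> small r (a i)} \<subseteq> {..<N}"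
    using a unfolding fnull_def by (meson nat_bounded)
  have "\<forall>n\<ge>N. small r (lc_psum a n - csum a)"
  proof (intro allI impI)
    fix n assume "N \<le> n"
    show "small r (lc_psum a n - csum a)" unfolding small_def
    proof (intro allI impI)
      fix p assume "p \<le> r"
      have "{i. lc_coeff (a i) p \<noteq> 0} \<subseteq> {..<n}"
        using N \<open>N \<le> n\<close> \<open>p \<le> r\<close> by (auto simp: small_def)
      then show "lc_coeff (lc_psum a n - csum a) p = 0"
        using csum_coeff_sub[OF a, of "{..<n}" p] by (simp add: psum_coeff)
    qed
  qed
  then show "\<exists>N. \<forall>n\<ge>N. small r (lc_psum a n - csum a)" by blast
qed

lemma conv_fnull: "conv (lc_psum a) s \<Longrightarrow> fnull a"
  unfolding fnull_def
proof
  fix r assume a: "conv (lc_psum a) s"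
  obtain N where N: "\<forall>n\<ge>N. small r (lc_psum a n - s)" using a unfolding conv_def by blast
  have "{i. \<not> small r (a i)} \<subseteq> {..<N}"
  proof
    fix i assume i: "i \<in> {i. \<not> small r (a i)}"
    show "i \<in> {..<N}"
    proof (rule ccontr)
      assume "i \<notin> {..<N}"
      then have "N \<le> i" "N \<le> Suc i" by auto
      then have "small r (lc_psum a (Suc i) - s)" "small r (lc_psum a i - s)"
        using N by blast+
      then have "small r ((lc_psum a (Suc i) - s) - (lc_psum a i - s))"
        by (rule small_diff)
      then show False using i by (simp add: algebra_simps)
    qed
  qed
  then show "finite {i. \<not> small r (a i)}" by (rule finite_subset) simp
qed

lemma sums_iff: "lc_sums a s \<longleftrightarrow> fnull a \<and> s = csum a"
  unfolding lc_sums_def tendsto_conv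
  using fnull_conv conv_fnull conv_unique by blast

lemma conv_shiftN: "conv (\<lambda>n. f (n + k)) L \<longleftrightarrow> conv f L"
proof (induction k)
  case 0 then show ?case by simp
next
  case (Suc k)
  have "conv (\<lambda>n. f (n + Suc k)) L \<longleftrightarrow> conv (\<lambda>n. (\<lambda>m. f (m + k)) (Suc n)) L" by simp
  also have "\<dots> \<longleftrightarrow> conv (\<lambda>m. f (m + k)) L" by (rule conv_shift)
  finally show ?case using Suc by simp
qed

lemma psum_mono: "(\<And>n. 0 \<le> a n) \<Longrightarrow> m \<le> n \<Longrightarrow> lc_psum a m \<le> lc_psum a n"
proof (induction n)
  case 0 then show ?case by simp
next
  case (Suc n)
  then show ?case
  proof (cases "m = Suc n")
    case True then show ?thesis by simp
  next
    case False
    then have "lc_psum a m \<le> lc_psum a n" using Suc by simp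
    also have "\<dots> \<le> lc_psum a n + a n" using Suc.prems(1)[of n] by simp
    finally show ?thesis by simp
  qed
qed

lemma psum_le_sum:
  assumes "\<And>n. 0 \<le> a n" "lc_sums a s"
  shows "lc_psum a n \<le> s"
proof -
  have c: "conv (lc_psum a) s" using assms(2) unfolding lc_sums_def tendsto_conv .
  have "conv (\<lambda>m. lc_psum a (m + n)) s" using c conv_shiftN by blast
  then show ?thesis
  proof (rule conv_le[OF conv_const])
    fix m show "lc_psum a n \<le> lc_psum a (m + n)" by (rule psum_mono[OF assms(1)]) simp
  qed
qed

lemma term_le_sum:
  assumes "\<And>n. 0 \<le> a n" "lc_sums a s"
  shows "a n \<le> s"
proof -
  have "0 \<le> lc_psum a n" using psum_mono[OF assms(1), of 0 n] by simp
  then have "a n \<le> lc_psum a (Suc n)"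
    using add_increasing[OF \<open>0 \<le> lc_psum a n\<close> order_refl[of "a n"]] by simp
  also have "\<dots> \<le> s" by (rule psum_le_sum[OF assms])
  finally show ?thesis .
qed

lemma sum_nonneg:
  assumes "\<And>n. 0 \<le> a n" "lc_sums a s"
  shows "0 \<le> s"
  using psum_le_sum[OF assms, of 0] by simp

lemma sums_le:
  assumes "\<And>n. a n \<le> b n" "lc_sums a s" "lc_sums b t"
  shows "s \<le> t"
proof -
  have le: "lc_psum a n \<le> lc_psum b n" for n
  proof (induction n)
    case 0 then show ?case by simp
  next
    case (Suc n) then show ?case using add_mono[OF Suc assms(1)[of n]] by simp
  qed
  have "conv (lc_psum a) s" "conv (lc_psum b) t"
    using assms(2,3) unfolding lc_sums_def tendsto_conv by auto
  then show ?thesis using conv_le le by blast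
qed

lemma psum_add: "lc_psum (\<lambda>n. a n + b n) n = lc_psum a n + lc_psum b n"
  by (induction n) (auto simp: algebra_simps)

lemma sums_add: "lc_sums a s \<Longrightarrow> lc_sums b t \<Longrightarrow> lc_sums (\<lambda>n. a n + b n) (s + t)"
  unfolding lc_sums_def tendsto_conv psum_add by (rule conv_add)

lemma fnull_mono:
  assumes "\<And>n. 0 \<le> a n" "\<And>n. a n \<le> b n" "fnull b"
  shows "fnull a"
  unfolding fnull_def
proof
  fix r
  have "{i. \<not> small r (a i)} \<subseteq> {i. \<not> small r (b i)}"
    using small_mono assms(1,2) by blast
  then show "finite {i. \<not> small r (a i)}"
    using assms(3) unfolding fnull_def by (meson finite_subset)
qed

lemma psum_cons: "lc_psum (\<lambda>k. case k of 0 \<Rightarrow> x | Suc k \<Rightarrow> a k) (Suc n) = x + lc_psum a n"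
  by (induction n) (auto simp: algebra_simps)

lemma sums_cons: "lc_sums a s \<Longrightarrow> lc_sums (\<lambda>k. case k of 0 \<Rightarrow> x | Suc k \<Rightarrow> a k) (x + s)"
  unfolding lc_sums_def tendsto_conv
  apply (subst conv_shift[symmetric])
  unfolding psum_cons by (rule conv_add[OF conv_const])

lemma fnull_reindex:
  assumes "bij h" "fnull x"
  shows "fnull (x \<circ> h)" "csum (x \<circ> h) = csum x"
proof -
  have inj: "inj h" using assms(1) bij_is_inj by blast
  show f: "fnull (x \<circ> h)" unfolding fnull_def
  proof
    fix r
    have "{i. \<not> small r ((x \<circ> h) i)} = h -` {i. \<not> small r (x i)}" by auto
    moreover have "finite (h -` {i. \<not> small r (x i)})"
      using assms(2) inj unfolding fnull_def by (intro finite_vimageI) auto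
    ultimately show "finite {i. \<not> small r ((x \<circ> h) i)}" by simp
  qed
  show "csum (x \<circ> h) = csum x"
  proof (rule lc_eqI)
    fix p
    have e: "{i. lc_coeff ((x \<circ> h) i) p \<noteq> 0} = h -` {i. lc_coeff (x i) p \<noteq> 0}" by auto
    have im: "h ` (h -` {i. lc_coeff (x i) p \<noteq> 0}) = {i. lc_coeff (x i) p \<noteq> 0}"
      using assms(1) by (metis bij_is_surj surj_image_vimage_eq)
    have "lc_coeff (csum (x \<circ> h)) p = (\<Sum>i\<in>h -` {i. lc_coeff (x i) p \<noteq> 0}. lc_coeff (x (h i)) p)"
      unfolding csum_coeff[OF f] e by simp
    also have "\<dots> = (\<Sum>i\<in>{i. lc_coeff (x i) p \<noteq> 0}. lc_coeff (x i) p)"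
      using sum.reindex[of h "h -` {i. lc_coeff (x i) p \<noteq> 0}" "\<lambda>i. lc_coeff (x i) p"] im
        inj_on_subset[OF inj] by simp
    also have "\<dots> = lc_coeff (csum x) p" unfolding csum_coeff[OF assms(2)] ..
    finally show "lc_coeff (csum (x \<circ> h)) p = lc_coeff (csum x) p" .
  qed
qed

lemma double_sums:
  fixes l :: "nat \<Rightarrow> nat \<Rightarrow> lc"
  assumes nn: "\<And>k n. 0 \<le> l k n" and row: "\<And>k. lc_sums (l k) (s k)" and tot: "lc_sums s T"
  shows "lc_sums (\<lambda>j. l (fst (prod_decode j)) (snd (prod_decode j))) T"
proof -
  define x where "x = (\<lambda>(k,n). l k n)"
  have rowf: "fnull (l k)" "s k = csum (l k)" for k using row[of k] unfolding sums_iff by auto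
  have totf: "fnull s" "T = csum s" using tot unfolding sums_iff by auto
  have le: "l k n \<le> s k" for k n by (rule term_le_sum[OF nn row])
  have sm: "small r (s k) \<Longrightarrow> small r (l k n)" for r k n
    using small_mono[OF nn le] by blast
  have sub: "{i. \<not> small r (x i)} \<subseteq> Sigma {k. \<not> small r (s k)} (\<lambda>k. {n. \<not> small r (l k n)})" for r
    unfolding x_def using sm by (auto simp del: split_paired_all)
  have fx: "fnull x" unfolding fnull_def
  proof
    fix r
    have "finite (Sigma {k. \<not> small r (s k)} (\<lambda>k. {n. \<not> small r (l k n)}))"
      using totf(1) rowf(1) unfolding fnull_def by blast
    then show "finite {i. \<not> small r (x i)}" using sub[of r] by (rule finite_subset[rotated])
  qed
  have cx: "csum x = T"
  proof (rule lc_eqI)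
    fix p
    let ?K = "{k. \<not> small p (s k)}" and ?N = "\<lambda>k. {n. \<not> small p (l k n)}"
    have finK: "finite ?K" using totf(1) unfolding fnull_def by blast
    have finN: "finite (?N k)" for k using rowf(1) unfolding fnull_def by blast
    have "lc_coeff (csum x) p = (\<Sum>i\<in>Sigma ?K ?N. lc_coeff (x i) p)"
      using fx finK finN supp_sub[of x p] sub[of p] by (intro csum_coeff_sub) auto
    also have "\<dots> = (\<Sum>k\<in>?K. \<Sum>n\<in>?N k. lc_coeff (l k n) p)"
      unfolding x_def using finK finN sum.Sigma[of ?K ?N "\<lambda>k n. lc_coeff (l k n) p"]
      by (simp add: case_prod_unfold)
    also have "\<dots> = (\<Sum>k\<in>?K. lc_coeff (s k) p)"
    proof (rule sum.cong[OF refl])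
      fix k
      show "(\<Sum>n\<in>?N k. lc_coeff (l k n) p) = lc_coeff (s k) p"
        unfolding rowf(2)[of k] using rowf(1) finN supp_sub[of "l k" p]
        by (intro csum_coeff_sub[symmetric]) auto
    qed
    also have "\<dots> = lc_coeff T p"
      unfolding totf(2) using totf(1) finK supp_sub[of s p]
      by (intro csum_coeff_sub[symmetric]) auto
    finally show "lc_coeff (csum x) p = lc_coeff T p" .
  qed
  have b: "bij prod_decode" by (simp add: bij_prod_decode)
  have "(\<lambda>j. l (fst (prod_decode j)) (snd (prod_decode j))) = x \<circ> prod_decode"
    unfolding x_def by (auto simp: split_beta)
  then show ?thesis unfolding sums_iff using fnull_reindex[OF b fx] cx by simp
qed


abbreviation M :: "lc set \<Rightarrow> lc" where "M \<equiv> outer_measure"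

lemma interval_pos: "interval_with_ends S a b \<Longrightarrow> 0 \<le> b - a"
  unfolding interval_with_ends_def by (simp add: less_imp_le)

lemma cover_nonneg: "cover_sum A s \<Longrightarrow> 0 \<le> s"
  unfolding cover_sum_def using sum_nonneg interval_pos by metis

lemma cover_subset: "cover_sum B s \<Longrightarrow> A \<subseteq> B \<Longrightarrow> cover_sum A s"
  unfolding cover_sum_def by blast

lemma psum_inter:
  "lc_psum (\<lambda>j. if even j then a (j div 2) else b (j div 2)) (2 * n) = lc_psum a n + lc_psum b n"
proof (induction n)
  case 0 then show ?case by simp
next
  case (Suc n)
  have "2 * Suc n = Suc (Suc (2 * n))" by simp
  then show ?case using Suc by (simp add: algebra_simps)
qed

lemma sums_inter:
  assumes "lc_sums a s" "lc_sums b t"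
  shows "lc_sums (\<lambda>j. if even j then a (j div 2) else b (j div 2)) (s + t)"
proof -
  let ?c = "\<lambda>j. if even j then a (j div 2) else b (j div 2)"
  have ca: "conv (lc_psum a) s" and cb: "conv (lc_psum b) t"
    using assms unfolding lc_sums_def tendsto_conv by auto
  have "conv (lc_psum ?c) (s + t)" unfolding conv_def
  proof
    fix r
    obtain N1 where N1: "\<forall>n\<ge>N1. small r (lc_psum a n - s)" using ca unfolding conv_def by blast
    obtain N2 where N2: "\<forall>n\<ge>N2. small r (lc_psum b n - t)" using cb unfolding conv_def by blast
    let ?N = "max N1 N2"
    have "\<forall>j\<ge>2 * ?N. small r (lc_psum ?c j - (s + t))"
    proof (intro allI impI)
      fix j assume j: "2 * ?N \<le> j"
      define n where "n = j div 2"
      have n: "N1 \<le> n" "N2 \<le> n" using j unfolding n_def by auto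
      have n1: "N1 \<le> Suc n" using n by simp
      have s1: "small r (lc_psum a n - s)" "small r (lc_psum a (Suc n) - s)" "small r (lc_psum b n - t)"
        using N1[rule_format, OF n(1)] N1[rule_format, OF n1] N2[rule_format, OF n(2)] by blast+
      have e: "lc_psum ?c (2 * n) - (s + t) = (lc_psum a n - s) + (lc_psum b n - t)"
        unfolding psum_inter by (simp add: algebra_simps)
      have es: "small r (lc_psum ?c (2 * n) - (s + t))"
        unfolding e using s1 by (intro small_add)
      show "small r (lc_psum ?c j - (s + t))"
      proof (cases "even j")
        case True
        then have "j = 2 * n" unfolding n_def by simp
        then show ?thesis using es by simp
      next
        case False
        then have jn: "j = Suc (2 * n)" unfolding n_def by presburger
        have an: "a n = (lc_psum a (Suc n) - s) - (lc_psum a n - s)" by simp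
        have "small r (a n)" unfolding an using s1(2,1) by (rule small_diff)
        moreover have "lc_psum ?c j - (s + t) = (lc_psum ?c (2 * n) - (s + t)) + a n"
          unfolding jn by (simp add: algebra_simps)
        ultimately show ?thesis using small_add[OF es \<open>small r (a n)\<close>] by (simp add: diff_add_eq)
      qed
    qed
    then show "\<exists>N. \<forall>n\<ge>N. small r (lc_psum ?c n - (s + t))" by blast
  qed
  then show ?thesis unfolding lc_sums_def tendsto_conv .
qed

lemma cover_union2:
  assumes "cover_sum E s" "cover_sum F t"
  shows "cover_sum (E \<union> F) (s + t)"
proof -
  obtain I a b where 1: "\<forall>n. interval_with_ends (I n) (a n) (b n)" "E \<subseteq> (\<Union>n. I n)"
      "lc_sums (\<lambda>n. b n - a n) s"
    using assms(1) unfolding cover_sum_def by blast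
  obtain I' a' b' where 2: "\<forall>n. interval_with_ends (I' n) (a' n) (b' n)" "F \<subseteq> (\<Union>n. I' n)"
      "lc_sums (\<lambda>n. b' n - a' n) t"
    using assms(2) unfolding cover_sum_def by blast
  define J where "J = (\<lambda>j. if even j then I (j div 2) else I' (j div 2))"
  define c where "c = (\<lambda>j. if even j then a (j div 2) else a' (j div 2))"
  define d where "d = (\<lambda>j. if even j then b (j div 2) else b' (j div 2))"
  have "\<forall>j. interval_with_ends (J j) (c j) (d j)"
    unfolding J_def c_def d_def using 1(1) 2(1) by auto
  moreover have "E \<union> F \<subseteq> (\<Union>j. J j)"
  proof
    fix x assume "x \<in> E \<union> F"
    then show "x \<in> (\<Union>j. J j)"
    proof
      assume "x \<in> E"
      then obtain n where "x \<in> I n" using 1(2) by blast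
      then have "x \<in> J (2 * n)" unfolding J_def by simp
      then show ?thesis by blast
    next
      assume "x \<in> F"
      then obtain n where "x \<in> I' n" using 2(2) by blast
      then have "x \<in> J (Suc (2 * n))" unfolding J_def by simp
      then show ?thesis by blast
    qed
  qed
  moreover have "(\<lambda>j. d j - c j) = (\<lambda>j. if even j then (\<lambda>n. b n - a n) (j div 2) else (\<lambda>n. b' n - a' n) (j div 2))"
    unfolding c_def d_def by auto
  then have "lc_sums (\<lambda>j. d j - c j) (s + t)" using sums_inter[OF 1(3) 2(3)] by simp
  ultimately show ?thesis unfolding cover_sum_def by blast
qed

lemma cover_unionN:
  assumes "\<And>k. cover_sum (E k) (s k)" "lc_sums s T"
  shows "cover_sum (\<Union>k. E k) T"
proof -
  have "\<forall>k. \<exists>I a b. (\<forall>n. interval_with_ends (I n) (a n) (b n)) \<and> E k \<subseteq> (\<Union>n. I n) \<and>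
     lc_sums (\<lambda>n. b n - a n) (s k)" using assms(1) unfolding cover_sum_def by blast
  then obtain I a b where H: "\<And>k. (\<forall>n. interval_with_ends (I k n) (a k n) (b k n)) \<and> E k \<subseteq> (\<Union>n. I k n) \<and>
     lc_sums (\<lambda>n. b k n - a k n) (s k)" by metis
  define J where "J = (\<lambda>j. I (fst (prod_decode j)) (snd (prod_decode j)))"
  define c where "c = (\<lambda>j. a (fst (prod_decode j)) (snd (prod_decode j)))"
  define d where "d = (\<lambda>j. b (fst (prod_decode j)) (snd (prod_decode j)))"
  have "\<forall>j. interval_with_ends (J j) (c j) (d j)"
    unfolding J_def c_def d_def using H by blast
  moreover have "(\<Union>k. E k) \<subseteq> (\<Union>j. J j)"
  proof
    fix x assume "x \<in> (\<Union>k. E k)"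
    then obtain k where "x \<in> E k" by blast
    then obtain n where "x \<in> I k n" using H by blast
    then have "x \<in> J (prod_encode (k, n))" unfolding J_def by simp
    then show "x \<in> (\<Union>j. J j)" by blast
  qed
  moreover have "lc_sums (\<lambda>j. d j - c j) T"
  proof -
    have "lc_sums (\<lambda>j. (\<lambda>k n. b k n - a k n) (fst (prod_decode j)) (snd (prod_decode j))) T"
    proof (rule double_sums)
      fix k n show "0 \<le> b k n - a k n" using H interval_pos by blast
    next
      fix k show "lc_sums (\<lambda>n. b k n - a k n) (s k)" using H by blast
    qed (rule assms(2))
    then show ?thesis unfolding c_def d_def by simp
  qed
  ultimately show ?thesis unfolding cover_sum_def by blast
qed

lemma inf_unique: "is_lc_inf S m \<Longrightarrow> is_lc_inf S m' \<Longrightarrow> m = m'"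
  unfolding is_lc_inf_def by (meson order.antisym)

lemma om_inf: "outer_measurable A \<Longrightarrow> is_lc_inf {s. cover_sum A s} (M A)"
  unfolding outer_measurable_def outer_measure_def
  by (metis (mono_tags, lifting) inf_unique theI)

lemma om_lower: "outer_measurable A \<Longrightarrow> cover_sum A s \<Longrightarrow> M A \<le> s"
  using om_inf unfolding is_lc_inf_def by blast

lemma om_approx:
  assumes "outer_measurable A"
  obtains s where "cover_sum A s" "small r (s - M A)"
proof -
  have H: "is_lc_inf {s. cover_sum A s} (M A)" by (rule om_inf[OF assms])
  have "\<not> (M A + tiny (r + 1) \<le> M A)" using tiny_pos[of "r+1"] by simp
  then obtain s where s: "cover_sum A s" "\<not> M A + tiny (r + 1) \<le> s"
    using H unfolding is_lc_inf_def by blast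
  have "M A \<le> s" using H s(1) unfolding is_lc_inf_def by blast
  then have "0 \<le> s - M A" by simp
  moreover have "s - M A \<le> tiny (r + 1)" using s(2) by (simp add: algebra_simps)
  ultimately have "small r (s - M A)" using small_mono tiny_small by (meson less_add_one)
  then show ?thesis using s(1) that by blast
qed

lemma om_intro:
  assumes "\<And>s. cover_sum A s \<Longrightarrow> m \<le> s"
    and "\<And>r. \<exists>s. cover_sum A s \<and> small r (s - m)"
  shows "outer_measurable A" "M A = m"
proof -
  have "is_lc_inf {s. cover_sum A s} m" unfolding is_lc_inf_def
  proof (intro conjI allI impI ballI)
    fix s assume "s \<in> {s. cover_sum A s}" then show "m \<le> s" using assms(1) by simp
  next
    fix m' assume H: "\<forall>s\<in>{s. cover_sum A s}. m' \<le> s"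
    show "m' \<le> m"
    proof (rule le_by_small)
      fix r
      obtain s where "cover_sum A s" "small r (s - m)" using assms(2) by blast
      then show "\<exists>x. small r x \<and> m' \<le> m + x" using H by (intro exI[of _ "s - m"]) simp
    qed
  qed
  then show om: "outer_measurable A" unfolding outer_measurable_def by blast
  show "M A = m" using om_inf[OF om] inf_unique \<open>is_lc_inf {s. cover_sum A s} m\<close> by blast
qed

lemma om_mono:
  assumes "A \<subseteq> B" "outer_measurable A" "outer_measurable B"
  shows "M A \<le> M B"
proof (rule le_by_small)
  fix r
  obtain s where s: "cover_sum B s" "small r (s - M B)" using om_approx[OF assms(3)] by blast
  then have "M A \<le> s" using om_lower[OF assms(2)] cover_subset assms(1) by blast
  then show "\<exists>x. small r x \<and> M A \<le> M B + x" using s by (intro exI[of _ "s - M B"]) simp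
qed

lemma om_split_lower:
  assumes "outer_measurable B" "outer_measurable X" "B \<subseteq> X \<union> Y" "cover_sum Y s"
  shows "M B \<le> s + M X"
proof (rule le_by_small)
  fix r
  obtain t where t: "cover_sum X t" "small r (t - M X)" using om_approx[OF assms(2)] by blast
  have "cover_sum (X \<union> Y) (t + s)" by (rule cover_union2[OF t(1) assms(4)])
  then have "M B \<le> t + s" using om_lower[OF assms(1)] cover_subset assms(3) by blast
  then show "\<exists>x. small r x \<and> M B \<le> s + M X + x" using t
    by (intro exI[of _ "t - M X"]) (simp add: algebra_simps)
qed

lemma om_union_upper:
  assumes "outer_measurable E" "outer_measurable F"
  shows "\<exists>u. cover_sum (E \<union> F) u \<and> small r (u - (M E + M F))"
proof -
  obtain s where s: "cover_sum E s" "small r (s - M E)" using om_approx[OF assms(1)] by blast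
  obtain t where t: "cover_sum F t" "small r (t - M F)" using om_approx[OF assms(2)] by blast
  have "small r ((s - M E) + (t - M F))" using s t small_add by blast
  then have "small r ((s + t) - (M E + M F))" by (simp add: algebra_simps)
  then show ?thesis using cover_union2[OF s(1) t(1)] by blast
qed

lemma Lm_inter2:
  assumes A: "L_measurable A" and A': "L_measurable A'"
  shows "L_measurable (A \<inter> A')"
  unfolding L_measurable_def
proof (intro conjI allI impI)
  have "outer_measurable A" using A unfolding L_measurable_def by blast
  then have "outer_measurable (A' \<inter> A)" using A' unfolding L_measurable_def by blast
  then show "outer_measurable (A \<inter> A')" by (simp add: Int_commute)
next
  fix B assume B: "outer_measurable B"
  have 1: "outer_measurable (A \<inter> B)" "outer_measurable (- A \<inter> B)"
      "M B = M (A \<inter> B) + M (- A \<inter> B)" using A B unfolding L_measurable_def by blast+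
  have 2: "outer_measurable (A' \<inter> (A \<inter> B))" "outer_measurable (- A' \<inter> (A \<inter> B))"
      "M (A \<inter> B) = M (A' \<inter> (A \<inter> B)) + M (- A' \<inter> (A \<inter> B))"
    using A' 1(1) unfolding L_measurable_def by blast+
  have e1: "A \<inter> A' \<inter> B = A' \<inter> (A \<inter> B)" by blast
  have e2: "- (A \<inter> A') \<inter> B = (- A' \<inter> (A \<inter> B)) \<union> (- A \<inter> B)" by blast
  let ?m = "M (- A' \<inter> (A \<inter> B)) + M (- A \<inter> B)"
  have Y: "outer_measurable (- (A \<inter> A') \<inter> B)" "M (- (A \<inter> A') \<inter> B) = ?m"
  proof -
    have lo: "?m \<le> s" if "cover_sum (- (A \<inter> A') \<inter> B) s" for s
    proof -
      have "M B \<le> s + M (A' \<inter> (A \<inter> B))"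
        using B 2(1) that unfolding e1 by (intro om_split_lower) auto
      then have "?m + M (A' \<inter> (A \<inter> B)) \<le> s + M (A' \<inter> (A \<inter> B))"
        using 1(3) 2(3) by (simp add: algebra_simps)
      then show ?thesis by (rule add_le_imp_le_right)
    qed
    have up: "\<exists>s. cover_sum (- (A \<inter> A') \<inter> B) s \<and> small r (s - ?m)" for r
      unfolding e2 using om_union_upper[OF 2(2) 1(2)] .
    show "outer_measurable (- (A \<inter> A') \<inter> B)" "M (- (A \<inter> A') \<inter> B) = ?m"
      using om_intro[OF lo up] by auto
  qed
  show "outer_measurable (A \<inter> A' \<inter> B)" using 2(1) e1 by simp
  show "outer_measurable (- (A \<inter> A') \<inter> B)" by (rule Y(1))
  show "M B = M (A \<inter> A' \<inter> B) + M (- (A \<inter> A') \<inter> B)"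
    unfolding Y(2) e1 using 1(3) 2(3) by (simp add: algebra_simps)
qed


lemma finite_nat_le_rat: "finite {k::nat. of_nat k \<le> (c::rat)}"
proof -
  have "{k::nat. of_nat k \<le> c} \<subseteq> {..nat \<lceil>c\<rceil>}"
  proof
    fix k assume "k \<in> {k::nat. of_nat k \<le> c}"
    then have "of_nat k \<le> c" by simp
    then have "int k \<le> \<lceil>c\<rceil>" by (metis ceiling_mono ceiling_of_nat)
    then show "k \<in> {..nat \<lceil>c\<rceil>}" by simp
  qed
  then show ?thesis by (rule finite_subset) simp
qed

lemma tiny_seq:
  "fnull (\<lambda>k::nat. tiny (r + 1 + of_nat k))" "small r (csum (\<lambda>k::nat. tiny (r + 1 + of_nat k)))"
proof -
  show f: "fnull (\<lambda>k::nat. tiny (r + 1 + of_nat k))" unfolding fnull_def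
  proof
    fix r'
    have "{k::nat. \<not> small r' (tiny (r + 1 + of_nat k))} \<subseteq> {k::nat. of_nat k \<le> r' - r - 1}"
    proof
      fix k assume "k \<in> {k::nat. \<not> small r' (tiny (r + 1 + of_nat k))}"
      then have "\<not> r' < r + 1 + of_nat k" using tiny_small by blast
      then show "k \<in> {k::nat. of_nat k \<le> r' - r - 1}" by simp
    qed
    then show "finite {k::nat. \<not> small r' (tiny (r + 1 + of_nat k))}"
      using finite_nat_le_rat finite_subset by blast
  qed
  show "small r (csum (\<lambda>k::nat. tiny (r + 1 + of_nat k)))" unfolding small_def
  proof (intro allI impI)
    fix p assume "p \<le> r"
    then have "{k::nat. lc_coeff (tiny (r + 1 + of_nat k)) p \<noteq> 0} = {}"
      by (auto simp: add.commute)
    then show "lc_coeff (csum (\<lambda>k::nat. tiny (r + 1 + of_nat k))) p = 0"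
      using csum_coeff[OF f, of p] by simp
  qed
qed

lemma om_approx_le:
  assumes "outer_measurable A"
  obtains s where "cover_sum A s" "M A \<le> s" "s - M A \<le> tiny q"
proof -
  have H: "is_lc_inf {s. cover_sum A s} (M A)" by (rule om_inf[OF assms])
  have "\<not> (M A + tiny q \<le> M A)" using tiny_pos[of q] by simp
  then obtain s where s: "cover_sum A s" "\<not> M A + tiny q \<le> s"
    using H unfolding is_lc_inf_def by blast
  have "M A \<le> s" using H s(1) unfolding is_lc_inf_def by blast
  moreover have "s - M A \<le> tiny q" using s(2) by (simp add: algebra_simps)
  ultimately show ?thesis using s(1) that by blast
qed

lemma om_nonneg: "outer_measurable A \<Longrightarrow> 0 \<le> M A"
proof (rule le_by_small)
  fix r assume "outer_measurable A"
  then obtain s where s: "cover_sum A s" "small r (s - M A)" using om_approx by blast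
  then show "\<exists>x. small r x \<and> 0 \<le> M A + x" using cover_nonneg[OF s(1)]
    by (intro exI[of _ "s - M A"]) simp
qed

lemma tail_covers:
  assumes om: "\<And>k. outer_measurable (Q k)" and S: "lc_sums (\<lambda>k. M (Q k)) S"
  shows "\<exists>t x. (\<forall>k. cover_sum (Q k) (t k)) \<and> lc_sums t (S + x) \<and> small r x \<and> 0 \<le> x"
proof -
  let ?\<tau> = "\<lambda>k::nat. tiny (r + 1 + of_nat k)"
  have "\<forall>k. \<exists>s. cover_sum (Q k) s \<and> M (Q k) \<le> s \<and> s - M (Q k) \<le> ?\<tau> k"
    using om_approx_le[OF om] by metis
  then obtain t where t: "\<And>k. cover_sum (Q k) (t k) \<and> M (Q k) \<le> t k \<and> t k - M (Q k) \<le> ?\<tau> k"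
    by metis
  define e where "e = (\<lambda>k. t k - M (Q k))"
  have e0: "0 \<le> e k" for k using t[of k] unfolding e_def by simp
  have ele: "e k \<le> ?\<tau> k" for k using t[of k] unfolding e_def by simp
  have fe: "fnull e" using fnull_mono[OF e0 ele tiny_seq(1)] .
  have se: "lc_sums e (csum e)" using fe sums_iff by blast
  have st: "lc_sums ?\<tau> (csum ?\<tau>)" using tiny_seq(1) sums_iff by blast
  have le: "csum e \<le> csum ?\<tau>" by (rule sums_le[OF ele se st])
  have nn: "0 \<le> csum e" by (rule sum_nonneg[OF e0 se])
  have sm: "small r (csum e)" using small_mono[OF nn le tiny_seq(2)] .
  have "lc_sums (\<lambda>k. M (Q k) + e k) (S + csum e)" by (rule sums_add[OF S se])
  moreover have "(\<lambda>k. M (Q k) + e k) = t" unfolding e_def by auto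
  ultimately have "lc_sums t (S + csum e)" by simp
  moreover have "\<forall>k. cover_sum (Q k) (t k)" using t by blast
  ultimately show ?thesis using sm nn by (intro exI[of _ t] exI[of _ "csum e"]) simp
qed

lemma conv_fnull_diff:
  assumes "conv g L"
  shows "fnull (\<lambda>k. g k - g (Suc k))"
  unfolding fnull_def
proof
  fix r
  obtain N where N: "\<forall>n\<ge>N. small r (g n - L)" using assms unfolding conv_def by blast
  have "{k. \<not> small r (g k - g (Suc k))} \<subseteq> {..<N}"
  proof
    fix k assume k: "k \<in> {k. \<not> small r (g k - g (Suc k))}"
    show "k \<in> {..<N}"
    proof (rule ccontr)
      assume "k \<notin> {..<N}"
      then have "N \<le> k" "N \<le> Suc k" by auto
      then have "small r ((g k - L) - (g (Suc k) - L))" using N small_diff by blast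
      then show False using k by simp
    qed
  qed
  then show "finite {k. \<not> small r (g k - g (Suc k))}" by (rule finite_subset) simp
qed

lemma chain_escape:
  fixes G :: "nat \<Rightarrow> lc set"
  shows "x \<in> G 0 \<Longrightarrow> x \<notin> G k \<Longrightarrow> \<exists>j. x \<in> G j \<and> x \<notin> G (Suc j)"
  by (induction k) auto

theorem mainTheorem20:
  fixes A :: "nat \<Rightarrow> lc set"
  assumes "\<forall>n\<ge>1. L_measurable (A n)"
    and "\<exists>L. lc_tendsto (\<lambda>N. L_measure (\<Inter>n\<in>{1..N}. A n)) L"
  shows "L_measurable (\<Inter>n\<in>{1..}. A n)"
proof -
  define G where "G = (\<lambda>k. \<Inter>n\<in>{1..Suc k}. A n)"
  define Ai where "Ai = (\<Inter>n\<in>{1..}. A n)"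
  have G0: "G 0 = A 1" unfolding G_def by simp
  have GS: "G (Suc k) = G k \<inter> A (Suc (Suc k))" for k
  proof -
    have "{1..Suc (Suc k)} = insert (Suc (Suc k)) {1..Suc k}" by auto
    then show ?thesis unfolding G_def by auto
  qed
  have LG: "L_measurable (G k)" for k
  proof (induction k)
    case 0 then show ?case using assms(1) G0 by simp
  next
    case (Suc k) then show ?case unfolding GS using assms(1) Lm_inter2 by simp
  qed
  have Gdec: "G (Suc k) \<subseteq> G k" for k using GS by auto
  have Ai_G: "x \<in> Ai \<longleftrightarrow> (\<forall>k. x \<in> G k)" for x
  proof
    assume "x \<in> Ai" then show "\<forall>k. x \<in> G k" unfolding Ai_def G_def by auto
  next
    assume H: "\<forall>k. x \<in> G k"
    show "x \<in> Ai" unfolding Ai_def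
    proof
      fix n :: nat assume "n \<in> {1..}"
      then have "n \<in> {1..Suc n}" by simp
      then show "x \<in> A n" using H[rule_format, of n] unfolding G_def by blast
    qed
  qed
  obtain L where L: "lc_tendsto (\<lambda>N. M (\<Inter>n\<in>{1..N}. A n)) L"
    using assms(2) unfolding L_measure_def by blast
  let ?g = "\<lambda>k. M (G k)"
  have cg: "conv ?g L"
  proof -
    let ?h = "\<lambda>N. M (\<Inter>n\<in>{1..N}. A n)"
    have h: "conv ?h L" using L unfolding tendsto_conv .
    have eq: "?g = (\<lambda>k. ?h (Suc k))" unfolding G_def by (rule refl)
    show ?thesis unfolding eq by (rule conv_shift[of ?h L, THEN iffD2, OF h])
  qed
  have omG: "outer_measurable (G k)" for k using LG unfolding L_measurable_def by blast
  have gsplit: "M (G k) = M (G (Suc k)) + M (- G (Suc k) \<inter> G k)"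
    and omdG: "outer_measurable (- G (Suc k) \<inter> G k)" for k
  proof -
    have "G (Suc k) \<inter> G k = G (Suc k)" using Gdec by blast
    then show "M (G k) = M (G (Suc k)) + M (- G (Suc k) \<inter> G k)"
      using LG[of "Suc k"] omG[of k] unfolding L_measurable_def by metis
    show "outer_measurable (- G (Suc k) \<inter> G k)"
      using LG[of "Suc k"] omG[of k] unfolding L_measurable_def by blast
  qed
  have fdelta: "fnull (\<lambda>k. M (- G (Suc k) \<inter> G k))"
  proof -
    have "M (- G (Suc k) \<inter> G k) = ?g k - ?g (Suc k)" for k
      using gsplit[of k] by (simp add: algebra_simps)
    then have "(\<lambda>k. M (- G (Suc k) \<inter> G k)) = (\<lambda>k. ?g k - ?g (Suc k))" by (rule ext)
    then show ?thesis using conv_fnull_diff[OF cg] by simp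
  qed
  have main: "outer_measurable (Ai \<inter> B) \<and> outer_measurable (- Ai \<inter> B) \<and>
        M B = M (Ai \<inter> B) + M (- Ai \<inter> B)" if B: "outer_measurable B" for B
  proof -
    define Q where "Q = (\<lambda>k. - G (Suc k) \<inter> (G k \<inter> B))"
    define f where "f = (\<lambda>k. M (G k \<inter> B))"
    define d where "d = (\<lambda>k. M (Q k))"
    have omGB: "outer_measurable (G k \<inter> B)" for k using LG B unfolding L_measurable_def by blast
    have omQ: "outer_measurable (Q k)" for k
      unfolding Q_def using LG[of "Suc k"] omGB[of k] unfolding L_measurable_def by blast
    have fsplit: "f k = f (Suc k) + d k" for k
    proof -
      have "G (Suc k) \<inter> (G k \<inter> B) = G (Suc k) \<inter> B" using Gdec by blast
      then show ?thesis unfolding f_def d_def Q_def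
        using LG[of "Suc k"] omGB[of k] unfolding L_measurable_def by metis
    qed
    have d0: "0 \<le> d k" for k unfolding d_def using om_nonneg[OF omQ] .
    have dle: "d k \<le> M (- G (Suc k) \<inter> G k)" for k
      unfolding d_def Q_def using omQ[of k] omdG[of k] unfolding Q_def
      by (intro om_mono) auto
    have fd: "fnull d" by (rule fnull_mono[OF d0 dle fdelta])
    define Sd where "Sd = csum d"
    have sd: "lc_sums d Sd" using fd sums_iff Sd_def by blast
    have psd: "lc_psum d n = f 0 - f n" for n
    proof (induction n)
      case 0 then show ?case by simp
    next
      case (Suc n) then show ?case using fsplit[of n] by (simp add: algebra_simps)
    qed
    define LB where "LB = f 0 - Sd"
    have cf: "conv f LB"
    proof -
      have "conv (\<lambda>n. f 0 - lc_psum d n) (f 0 - Sd)"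
        using sd unfolding lc_sums_def tendsto_conv by (intro conv_diff conv_const)
      moreover have "(\<lambda>n. f 0 - lc_psum d n) = f" using psd by auto
      ultimately show ?thesis unfolding LB_def by simp
    qed
    have inc1: "G 0 \<inter> B \<subseteq> (Ai \<inter> B) \<union> (\<Union>k. Q k)"
    proof
      fix x assume x: "x \<in> G 0 \<inter> B"
      show "x \<in> (Ai \<inter> B) \<union> (\<Union>k. Q k)"
      proof (cases "x \<in> Ai")
        case True then show ?thesis using x by blast
      next
        case False
        then obtain k where "x \<notin> G k" using Ai_G by blast
        then obtain j where "x \<in> G j" "x \<notin> G (Suc j)" using chain_escape[of x G] x by blast
        then show ?thesis using x unfolding Q_def by blast
      qed
    qed
    have inc2: "- Ai \<inter> B \<subseteq> (- G 0 \<inter> B) \<union> (\<Union>k. Q k)"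
    proof
      fix x assume x: "x \<in> - Ai \<inter> B"
      show "x \<in> (- G 0 \<inter> B) \<union> (\<Union>k. Q k)"
      proof (cases "x \<in> G 0")
        case False then show ?thesis using x by blast
      next
        case True
        obtain k where "x \<notin> G k" using Ai_G x by blast
        then obtain j where "x \<in> G j" "x \<notin> G (Suc j)" using chain_escape[of x G] True by blast
        then show ?thesis using x unfolding Q_def by blast
      qed
    qed
    have tails: "\<exists>t x. (\<forall>k. cover_sum (Q k) (t k)) \<and> lc_sums t (Sd + x) \<and> small r x \<and> 0 \<le> x" for r
      using tail_covers[of Q Sd r] omQ sd unfolding d_def by blast
    have lowA: "LB \<le> s" if s: "cover_sum (Ai \<inter> B) s" for s
    proof (rule le_by_small)
      fix r
      obtain t x where tx: "\<forall>k. cover_sum (Q k) (t k)" "lc_sums t (Sd + x)" "small r x" "0 \<le> x"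
        using tails by blast
      define E where "E = (\<lambda>k. case k of 0 \<Rightarrow> Ai \<inter> B | Suc k \<Rightarrow> Q k)"
      define u where "u = (\<lambda>k. case k of 0 \<Rightarrow> s | Suc k \<Rightarrow> t k)"
      have "cover_sum (E k) (u k)" for k unfolding E_def u_def using s tx(1) by (cases k) auto
      moreover have "lc_sums u (s + (Sd + x))" unfolding u_def by (rule sums_cons[OF tx(2)])
      ultimately have "cover_sum (\<Union>k. E k) (s + (Sd + x))" by (rule cover_unionN)
      moreover have "(\<Union>k. E k) = (Ai \<inter> B) \<union> (\<Union>k. Q k)"
        unfolding E_def by (auto split: nat.splits)
      ultimately have "cover_sum (G 0 \<inter> B) (s + (Sd + x))" using inc1 cover_subset by metis
      then have "f 0 \<le> s + (Sd + x)" unfolding f_def using om_lower[OF omGB] by blast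
      then have "LB \<le> s + x" unfolding LB_def by (simp add: algebra_simps)
      then show "\<exists>x. small r x \<and> LB \<le> s + x" using tx(3) by blast
    qed
    have upA: "\<exists>u. cover_sum (Ai \<inter> B) u \<and> small r (u - LB)" for r
    proof -
      obtain N where N: "small r (f N - LB)" using cf unfolding conv_def by blast
      obtain w where w: "cover_sum (G N \<inter> B) w" "small r (w - f N)"
        using om_approx[OF omGB] unfolding f_def by blast
      have "Ai \<inter> B \<subseteq> G N \<inter> B" using Ai_G by blast
      then have "cover_sum (Ai \<inter> B) w" using w(1) cover_subset by blast
      moreover have "small r (w - LB)"
        using small_add[OF w(2) N] by (simp add: algebra_simps)
      ultimately show ?thesis by blast
    qed
    have omA: "outer_measurable (Ai \<inter> B)" and MA: "M (Ai \<inter> B) = LB"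
      using om_intro[OF lowA upA] by auto
    have omR: "outer_measurable (- G 0 \<inter> B)" and Bsplit: "M B = f 0 + M (- G 0 \<inter> B)"
      using LG[of 0] B unfolding L_measurable_def f_def by blast+
    have lowB: "M B - LB \<le> s" if s: "cover_sum (- Ai \<inter> B) s" for s
    proof -
      have "M B \<le> s + M (Ai \<inter> B)" using B omA s by (intro om_split_lower) auto
      then show ?thesis using MA by (simp add: algebra_simps)
    qed
    have upB: "\<exists>u. cover_sum (- Ai \<inter> B) u \<and> small r (u - (M B - LB))" for r
    proof -
      obtain t x where tx: "\<forall>k. cover_sum (Q k) (t k)" "lc_sums t (Sd + x)" "small r x" "0 \<le> x"
        using tails by blast
      obtain w where w: "cover_sum (- G 0 \<inter> B) w" "small r (w - M (- G 0 \<inter> B))"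
        using om_approx[OF omR] by blast
      define E where "E = (\<lambda>k. case k of 0 \<Rightarrow> - G 0 \<inter> B | Suc k \<Rightarrow> Q k)"
      define u where "u = (\<lambda>k. case k of 0 \<Rightarrow> w | Suc k \<Rightarrow> t k)"
      have "cover_sum (E k) (u k)" for k unfolding E_def u_def using w(1) tx(1) by (cases k) auto
      moreover have "lc_sums u (w + (Sd + x))" unfolding u_def by (rule sums_cons[OF tx(2)])
      ultimately have "cover_sum (\<Union>k. E k) (w + (Sd + x))" by (rule cover_unionN)
      moreover have "(\<Union>k. E k) = (- G 0 \<inter> B) \<union> (\<Union>k. Q k)"
        unfolding E_def by (auto split: nat.splits)
      ultimately have c: "cover_sum (- Ai \<inter> B) (w + (Sd + x))" using inc2 cover_subset by metis
      have "small r ((w - M (- G 0 \<inter> B)) + x)" using small_add[OF w(2) tx(3)] .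
      moreover have "(w - M (- G 0 \<inter> B)) + x = (w + (Sd + x)) - (M B - LB)"
        unfolding Bsplit LB_def by (simp add: algebra_simps)
      ultimately show ?thesis using c by metis
    qed
    have omC: "outer_measurable (- Ai \<inter> B)" and MC: "M (- Ai \<inter> B) = M B - LB"
      using om_intro[OF lowB upB] by auto
    show ?thesis using omA omC MA MC by simp
  qed
  have "outer_measurable Ai"
  proof -
    have "Ai \<inter> G 0 = Ai" using Ai_G by blast
    then show ?thesis using main[OF omG[of 0]] by simp
  qed
  then have "L_measurable Ai" unfolding L_measurable_def using main by blast
  then show ?thesis unfolding Ai_def .
qed

end
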